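(* For $d\in\mathbb{N}$ let $\zeta_d\in\mathbb{C}$ be a primitive $d$-th root of unity. The following are equivalent: (i) for every $n\in\mathbb{N}$ the number of frieze patterns of height $n$ over $\mathbb{Z}[\zeta_d]\setminus\{0\}$ is finite; (ii) $\mathbb{Z}[\zeta_d]$ is a discrete subset of $\mathbb{C}$; (iii) the group of units of $\mathbb{Z}[\zeta_d]$ is finite; (iv) $d\in\{1,2,3,4,6\}$.
   Context: A frieze pattern of height $n$ over $S\subseteq\mathbb{C}$ is a family $(c_{i,j})_{i\in\mathbb{Z},\ i\le j\le i+n+3}$ of complex numbers such that: - $c_{i,i}=c_{i,i+n+3}=0$ and $c_{i,i+1}=c_{i,i+n+2}=1$; - $c_{i,j}\in S$ for $i+2\le j\le i+n+1$; - every adjacent $2\times2$ determinant $c_{i,j}c_{i+1,j+1}-c_{i,j+1}c_{i+1,j}$ (all entries defined) equals $1$. *)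

theory Defs
  imports "HOL-Analysis.Analysis" "HOL-Computational_Algebra.Polynomial"
begin

definition primitive_root_unity :: "nat \<Rightarrow> complex \<Rightarrow> bool" where
  "primitive_root_unity d z \<longleftrightarrow> d > 0 \<and> z ^ d = 1 \<and> (\<forall>k. 0 < k \<and> k < d \<longrightarrow> z ^ k \<noteq> 1)"

definition int_adjoin :: "complex \<Rightarrow> complex set" where
  "int_adjoin z = {poly (map_poly of_int p) z | p :: int poly. True}"

definition units_in :: "complex set \<Rightarrow> complex set" where
  "units_in R = {u \<in> R. \<exists>v \<in> R. u * v = 1}"

definition frieze_dom :: "nat \<Rightarrow> int \<Rightarrow> int \<Rightarrow> bool" where
  "frieze_dom n i j \<longleftrightarrow> i \<le> j \<and> j \<le> i + int n + 3"

definition is_frieze :: "nat \<Rightarrow> complex set \<Rightarrow> (int \<Rightarrow> int \<Rightarrow> complex) \<Rightarrow> bool" where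
  "is_frieze n S c \<longleftrightarrow>
     (\<forall>i. c i i = 0 \<and> c i (i + int n + 3) = 0 \<and> c i (i + 1) = 1 \<and> c i (i + int n + 2) = 1) \<and>
     (\<forall>i j. i + 2 \<le> j \<and> j \<le> i + int n + 1 \<longrightarrow> c i j \<in> S) \<and>
     (\<forall>i j. frieze_dom n i j \<and> frieze_dom n (i+1) (j+1) \<and> frieze_dom n i (j+1) \<and> frieze_dom n (i+1) j
        \<longrightarrow> c i j * c (i+1) (j+1) - c i (j+1) * c (i+1) j = 1)"

text \<open>Frieze patterns as families indexed by the domain only: we normalise
  the (irrelevant) values outside the domain to 0, so that distinct
  elements of this set are distinct frieze patterns.\<close>
definition friezes :: "nat \<Rightarrow> complex set \<Rightarrow> (int \<Rightarrow> int \<Rightarrow> complex) set" where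
  "friezes n S = {c. is_frieze n S c \<and> (\<forall>i j. \<not> frieze_dom n i j \<longrightarrow> c i j = 0)}"

end

theory Submission
  imports Defs
begin


definition det2 :: "complex \<times> complex \<Rightarrow> complex \<times> complex \<Rightarrow> complex" where
  "det2 p q = fst p * snd q - snd p * fst q"

definition scl :: "complex \<Rightarrow> complex \<times> complex \<Rightarrow> complex \<times> complex" where
  "scl c p = (c * fst p, c * snd p)"

lemma det2_scl: "det2 (scl a p) (scl b q) = a * b * det2 p q"
  by (simp add: det2_def scl_def algebra_simps)

lemma det2_self[simp]: "det2 p p = 0"
  by (simp add: det2_def algebra_simps)

lemma det2_swap: "det2 q p = - det2 p q"
  by (simp add: det2_def algebra_simps)

lemma pl4: "det2 b c * det2 p a - det2 a c * det2 p b + det2 a b * det2 p c = 0"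
  by (simp add: det2_def algebra_simps)

lemma pl_rec:
  assumes "det2 a b = 1" "det2 b c = 1"
  shows "det2 p c = det2 a c * det2 p b - det2 p a"
  using pl4[of b c p a] assms by (simp add: algebra_simps)

definition validp :: "nat \<Rightarrow> complex set \<Rightarrow> complex set \<Rightarrow> (nat \<Rightarrow> complex \<times> complex) \<Rightarrow> bool" where
  "validp m S E v \<longleftrightarrow> (\<forall>j. Suc j < m \<longrightarrow> det2 (v j) (v (Suc j)) = 1) \<and> det2 (v 0) (v (m - 1)) \<in> E
     \<and> (\<forall>i j. i + 2 \<le> j \<and> j < m \<and> \<not> (i = 0 \<and> j = m - 1) \<longrightarrow> det2 (v i) (v j) \<in> S)"

definition tabp :: "nat \<Rightarrow> (nat \<Rightarrow> complex \<times> complex) \<Rightarrow> nat \<Rightarrow> nat \<Rightarrow> complex" where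
  "tabp m v = (\<lambda>i j. if i < m \<and> j < m then det2 (v i) (v j) else 0)"

lemma growth:
  assumes V: "validp m S E v" and m: "3 \<le> m"
  shows "\<exists>k. 1 \<le> k \<and> k + 2 \<le> m \<and> cmod (det2 (v (k-1)) (v (k+1))) < 2 + cmod (det2 (v 0) (v (m-1)))"
proof (rule ccontr)
  define A where "A = 2 + cmod (det2 (v 0) (v (m-1)))"
  define w where "w j = det2 (v 0) (v j)" for j
  assume "\<not> ?thesis"
  then have big: "\<And>k. 1 \<le> k \<Longrightarrow> k + 2 \<le> m \<Longrightarrow> A \<le> cmod (det2 (v (k-1)) (v (k+1)))"
    unfolding A_def by (meson not_le)
  have cons: "\<And>j. Suc j < m \<Longrightarrow> det2 (v j) (v (Suc j)) = 1" using V unfolding validp_def by blast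
  have rec: "w (Suc j) = det2 (v (j-1)) (v (j+1)) * w j - w (j-1)" if "1 \<le> j" "j + 2 \<le> m" for j
  proof -
    have "det2 (v (j-1)) (v j) = 1" using cons[of "j-1"] that by simp
    moreover have "det2 (v j) (v (Suc j)) = 1" using cons[of j] that by simp
    ultimately show ?thesis unfolding w_def using pl_rec[of "v (j-1)" "v j" "v (Suc j)" "v 0"] by simp
  qed
  have A2: "2 \<le> A" unfolding A_def by simp
  have claim: "1 \<le> j \<longrightarrow> j + 1 \<le> m \<longrightarrow> (cmod (w (j-1)) \<le> cmod (w j) \<and> 1 \<le> cmod (w j) \<and> (2 \<le> j \<longrightarrow> A \<le> cmod (w j)))" for j
  proof (induction j)
    case 0 then show ?case by simp
  next
    case (Suc j)
    show ?case
    proof (intro impI)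
      assume h: "1 \<le> Suc j" "Suc j + 1 \<le> m"
      show "cmod (w (Suc j - 1)) \<le> cmod (w (Suc j)) \<and> 1 \<le> cmod (w (Suc j)) \<and> (2 \<le> Suc j \<longrightarrow> A \<le> cmod (w (Suc j)))"
      proof (cases "j = 0")
        case True
        have "w 0 = 0" unfolding w_def by simp
        moreover have "w 1 = 1" unfolding w_def using cons[of 0] m by simp
        ultimately show ?thesis using True by simp
      next
        case False
        then have j1: "1 \<le> j" by simp
        from Suc.IH j1 h have IH: "cmod (w (j-1)) \<le> cmod (w j)" "1 \<le> cmod (w j)" "2 \<le> j \<longrightarrow> A \<le> cmod (w j)" by auto
        have r: "w (Suc j) = det2 (v (j-1)) (v (j+1)) * w j - w (j-1)" using rec[OF j1] h by simp
        have aj: "A \<le> cmod (det2 (v (j-1)) (v (j+1)))" using big[OF j1] h by simp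
        have "cmod (det2 (v (j-1)) (v (j+1)) * w j) - cmod (w (j-1)) \<le> cmod (w (Suc j))"
          unfolding r by (rule norm_triangle_ineq2)
        moreover have "A * cmod (w j) \<le> cmod (det2 (v (j-1)) (v (j+1)) * w j)"
          using aj by (simp add: norm_mult mult_right_mono)
        ultimately have ge: "A * cmod (w j) - cmod (w (j-1)) \<le> cmod (w (Suc j))" by linarith
        show ?thesis
        proof (cases "j = 1")
          case True
          have "w 0 = 0" unfolding w_def by simp
          moreover have "w 1 = 1" unfolding w_def using cons[of 0] m by simp
          ultimately show ?thesis using ge True IH A2 by simp
        next
          case False
          then have "2 \<le> j" using j1 by simp
          with IH have Aw: "A \<le> cmod (w j)" by simp
          have "(A - 1) * cmod (w j) \<ge> 1 * cmod (w j)"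
            using A2 IH(2) by (intro mult_right_mono) auto
          then have "cmod (w j) \<le> cmod (w (Suc j))" using ge IH(1) by (simp add: left_diff_distrib)
          then show ?thesis using Aw IH A2 by simp
        qed
      qed
    qed
  qed
  from claim[of "m-1"] m have "A \<le> cmod (w (m-1))" by simp
  then show False unfolding A_def w_def by simp
qed


definition sig :: "nat \<Rightarrow> nat \<Rightarrow> nat" where "sig k j = (if j < k then j else Suc j)"
definition tau :: "nat \<Rightarrow> nat \<Rightarrow> nat" where "tau k i = (if i < k then i else i - 1)"
definition lam :: "nat \<Rightarrow> complex \<Rightarrow> nat \<Rightarrow> complex" where
  "lam k x j = (if j < k then 1 else if even (j - k) then inverse x else x)"
definition red :: "nat \<Rightarrow> complex \<Rightarrow> (nat \<Rightarrow> complex \<times> complex) \<Rightarrow> nat \<Rightarrow> complex \<times> complex" where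
  "red k x v j = scl (lam k x j) (v (sig k j))"
definition gval :: "nat \<Rightarrow> complex \<Rightarrow> (nat \<Rightarrow> nat \<Rightarrow> complex) \<Rightarrow> nat \<Rightarrow> nat \<Rightarrow> complex" where
  "gval k x T i j = T (tau k i) (tau k j) / (lam k x (tau k i) * lam k x (tau k j))"
definition recon :: "nat \<Rightarrow> nat \<Rightarrow> complex \<Rightarrow> (nat \<Rightarrow> nat \<Rightarrow> complex) \<Rightarrow> nat \<Rightarrow> nat \<Rightarrow> complex" where
  "recon m k x T = (\<lambda>i j. if i < Suc m \<and> j < Suc m then
     (if i = k \<and> j = k then 0
      else if j = k then (gval k x T i (k+1) + gval k x T i (k-1)) / x
      else if i = k then - ((gval k x T j (k+1) + gval k x T j (k-1)) / x)
      else gval k x T i j) else 0)"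
definition Sx :: "complex set \<Rightarrow> complex \<Rightarrow> complex set" where
  "Sx S x = (\<Union>c\<in>{1, x, inverse x, x * x, inverse x * inverse x}. (\<lambda>s. c * s) ` S)"
definition ExS :: "complex set \<Rightarrow> complex \<Rightarrow> complex set" where
  "ExS E x = (\<lambda>e. x * e) ` E \<union> (\<lambda>e. inverse x * e) ` E"

lemma lam_nz: "x \<noteq> 0 \<Longrightarrow> lam k x j \<noteq> 0"
  by (simp add: lam_def)

lemma lam_prod: "x \<noteq> 0 \<Longrightarrow> lam k x i * lam k x j \<in> {1, x, inverse x, x * x, inverse x * inverse x}"
  by (auto simp add: lam_def)

lemma red_valid:
  assumes V: "validp (Suc m) S E v" and m: "3 \<le> m" and k: "1 \<le> k" "k + 1 \<le> m"
    and x: "x = det2 (v (k-1)) (v (k+1))" "x \<noteq> 0"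
  shows "validp m (Sx S x) (ExS E x) (red k x v)"
proof -
  have cons: "\<And>j. Suc j < Suc m \<Longrightarrow> det2 (v j) (v (Suc j)) = 1" using V unfolding validp_def by blast
  have clo: "det2 (v 0) (v m) \<in> E" using V unfolding validp_def by simp
  have dia: "\<And>i j. i + 2 \<le> j \<Longrightarrow> j < Suc m \<Longrightarrow> \<not> (i = 0 \<and> j = m) \<Longrightarrow> det2 (v i) (v j) \<in> S"
    using V unfolding validp_def by auto
  have dr: "det2 (red k x v i) (red k x v j) = lam k x i * lam k x j * det2 (v (sig k i)) (v (sig k j))" for i j
    by (simp add: red_def det2_scl)
  have C1: "det2 (red k x v j) (red k x v (Suc j)) = 1" if "Suc j < m" for j
  proof (cases "Suc j < k")
    case True
    then show ?thesis using cons[of j] that by (simp add: dr sig_def lam_def)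
  next
    case False
    show ?thesis
    proof (cases "Suc j = k")
      case True
      then have "sig k j = k - 1" "sig k (Suc j) = k + 1" "lam k x j = 1" "lam k x (Suc j) = inverse x"
        by (auto simp add: sig_def lam_def)
      moreover have "det2 (v (k - 1)) (v (k+1)) = x" using x(1) by simp
      ultimately show ?thesis using x(2) by (simp add: dr)
    next
      case False2: False
      then have jk: "k \<le> j" using False by simp
      then have "sig k j = Suc j" "sig k (Suc j) = Suc (Suc j)" by (auto simp add: sig_def)
      moreover have "lam k x j * lam k x (Suc j) = 1"
        using jk x(2) by (auto simp add: lam_def Suc_diff_le)
      moreover have "det2 (v (Suc j)) (v (Suc (Suc j))) = 1" using cons[of "Suc j"] that by simp
      ultimately show ?thesis by (simp add: dr)
    qed
  qed
  have C2: "det2 (red k x v 0) (red k x v (m - 1)) \<in> ExS E x"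
  proof -
    have "sig k 0 = 0" "lam k x 0 = 1" "sig k (m-1) = m" using k by (auto simp add: sig_def lam_def)
    moreover have "lam k x (m-1) = inverse x \<or> lam k x (m-1) = x" using k by (auto simp add: lam_def)
    ultimately show ?thesis using clo unfolding ExS_def by (auto simp add: dr)
  qed
  have C3: "det2 (red k x v i) (red k x v j) \<in> Sx S x" if "i + 2 \<le> j" "j < m" "\<not> (i = 0 \<and> j = m - 1)" for i j
  proof -
    have "sig k i + 2 \<le> sig k j" "sig k j < Suc m" "\<not> (sig k i = 0 \<and> sig k j = m)"
      using that k by (auto simp add: sig_def)
    then have "det2 (v (sig k i)) (v (sig k j)) \<in> S" by (rule dia)
    then show ?thesis unfolding dr Sx_def using lam_prod[OF x(2), of k i j] by blast
  qed
  show ?thesis unfolding validp_def using C1 C2 C3 by blast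
qed

lemma red_recon:
  assumes V: "validp (Suc m) S E v" and m: "3 \<le> m" and k: "1 \<le> k" "k + 1 \<le> m"
    and x: "x = det2 (v (k-1)) (v (k+1))" "x \<noteq> 0"
  shows "tabp (Suc m) v = recon m k x (tabp m (red k x v))"
proof (intro ext)
  fix i j
  have cons: "\<And>j. Suc j < Suc m \<Longrightarrow> det2 (v j) (v (Suc j)) = 1" using V unfolding validp_def by blast
  have G: "gval k x (tabp m (red k x v)) i j = det2 (v i) (v j)" if "i < Suc m" "j < Suc m" "i \<noteq> k" "j \<noteq> k" for i j
  proof -
    have "tau k i < m" "tau k j < m" "sig k (tau k i) = i" "sig k (tau k j) = j"
      using that k by (auto simp add: tau_def sig_def)
    then show ?thesis
      using lam_nz[OF x(2)] by (simp add: gval_def tabp_def red_def det2_scl)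
  qed
  have K: "det2 (v i) (v k) = (det2 (v i) (v (k+1)) + det2 (v i) (v (k-1))) / x" for i
  proof -
    have "det2 (v (k-1)) (v k) = 1" using cons[of "k-1"] k by simp
    moreover have "det2 (v k) (v (Suc k)) = 1" using cons[of k] k by simp
    ultimately have "det2 (v i) (v (Suc k)) = x * det2 (v i) (v k) - det2 (v i) (v (k-1))"
      using pl_rec[of "v (k-1)" "v k" "v (Suc k)" "v i"] x by simp
    then show ?thesis using x(2) by (simp add: field_simps)
  qed
  show "tabp (Suc m) v i j = recon m k x (tabp m (red k x v)) i j"
  proof (cases "i < Suc m \<and> j < Suc m")
    case False
    then show ?thesis by (auto simp add: tabp_def recon_def)
  next
    case True
    have k1: "k + 1 < Suc m" "k - 1 < Suc m" "k + 1 \<noteq> k" "k - 1 \<noteq> k" using k by auto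
    show ?thesis
    proof (cases "i = k")
      case ik: True
      show ?thesis
      proof (cases "j = k")
        case True then show ?thesis using ik True by (simp add: tabp_def recon_def)
      next
        case False
        then show ?thesis using ik True K[of j] G[of j "k+1"] G[of j "k-1"] k1
          by (simp add: tabp_def recon_def det2_swap[of "v k" "v j"])
      qed
    next
      case False
      show ?thesis
      proof (cases "j = k")
        case jk: True
        then show ?thesis using False True K[of i] G[of i "k+1"] G[of i "k-1"] k1
          by (simp add: tabp_def recon_def)
      next
        case jk: False
        then show ?thesis using False True G[of i j] by (simp add: tabp_def recon_def)
      qed
    qed
  qed
qed


definition locfin :: "complex set \<Rightarrow> bool" where
  "locfin S \<longleftrightarrow> (\<forall>r. finite (S \<inter> cball 0 r))"

lemma locfin_scale:
  assumes "locfin S" "c \<noteq> 0"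
  shows "locfin ((\<lambda>s. c * s) ` S)"
  unfolding locfin_def
proof
  fix r
  have "(\<lambda>s. c * s) ` S \<inter> cball 0 r \<subseteq> (\<lambda>s. c * s) ` (S \<inter> cball 0 (r / cmod c))"
  proof
    fix y assume "y \<in> (\<lambda>s. c * s) ` S \<inter> cball 0 r"
    then obtain s where s: "s \<in> S" "y = c * s" "cmod (c * s) \<le> r" by auto
    then have "cmod s \<le> r / cmod c" using assms(2) by (simp add: norm_mult field_simps)
    then show "y \<in> (\<lambda>s. c * s) ` (S \<inter> cball 0 (r / cmod c))" using s by auto
  qed
  moreover have "finite (S \<inter> cball 0 (r / cmod c))" using assms(1) unfolding locfin_def by blast
  ultimately show "finite ((\<lambda>s. c * s) ` S \<inter> cball 0 r)" by (meson finite_imageI finite_subset)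
qed

lemma locfin_Sx:
  assumes "locfin S" "x \<noteq> 0"
  shows "locfin (Sx S x)"
proof -
  have "\<And>c. c \<in> {1, x, inverse x, x * x, inverse x * inverse x} \<Longrightarrow> locfin ((\<lambda>s. c * s) ` S)"
    using assms by (auto intro!: locfin_scale)
  then have h: "\<And>c r. c \<in> {1, x, inverse x, x * x, inverse x * inverse x} \<Longrightarrow> finite ((\<lambda>s. c * s) ` S \<inter> cball 0 r)"
    unfolding locfin_def by blast
  show ?thesis unfolding locfin_def
  proof
    fix r
    have "Sx S x \<inter> cball 0 r = (\<Union>c\<in>{1, x, inverse x, x * x, inverse x * inverse x}. (\<lambda>s. c * s) ` S \<inter> cball 0 r)"
      unfolding Sx_def by blast
    moreover have "finite (\<Union>c\<in>{1, x, inverse x, x * x, inverse x * inverse x}. (\<lambda>s. c * s) ` S \<inter> cball 0 r)"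
      by (rule finite_UN_I) (simp, rule h)
    ultimately show "finite (Sx S x \<inter> cball 0 r)" by simp
  qed
qed

lemma zero_Sx: "0 \<notin> S \<Longrightarrow> x \<noteq> 0 \<Longrightarrow> 0 \<notin> Sx S x"
  unfolding Sx_def by auto

lemma finite_ExS: "finite E \<Longrightarrow> finite (ExS E x)"
  unfolding ExS_def by simp

definition B3 :: "complex \<Rightarrow> nat \<Rightarrow> nat \<Rightarrow> complex" where
  "B3 e = (\<lambda>i j. if i < 3 \<and> j < 3 then
     (if i = j then 0 else if (i = 0 \<and> j = 1) \<or> (i = 1 \<and> j = 2) then 1
      else if (i = 1 \<and> j = 0) \<or> (i = 2 \<and> j = 1) then -1
      else if i = 0 \<and> j = 2 then e else - e) else 0)"

lemma base3:
  assumes "validp 3 S E v"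
  shows "tabp 3 v = B3 (det2 (v 0) (v 2))"
proof (intro ext)
  fix i j
  have c: "det2 (v 0) (v 1) = 1" "det2 (v 1) (v 2) = 1" using assms unfolding validp_def
    by (auto simp: numeral_eq_Suc)
  show "tabp 3 v i j = B3 (det2 (v 0) (v 2)) i j"
  proof (cases "i < 3 \<and> j < 3")
    case True
    then have "i \<in> {0,1,2}" "j \<in> {0,1,2}" by auto
    then show ?thesis using c det2_swap[of "v 1" "v 0"] det2_swap[of "v 2" "v 1"] det2_swap[of "v 2" "v 0"]
      by (auto simp add: tabp_def B3_def)
  next
    case False then show ?thesis by (auto simp add: tabp_def B3_def)
  qed
qed

theorem poly_finite:
  assumes "3 \<le> m"
  shows "\<forall>S E. 0 \<notin> S \<longrightarrow> locfin S \<longrightarrow> finite E \<longrightarrow> finite (tabp m ` {v. validp m S E v})"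
  using assms
proof (induction m rule: nat_induct_at_least)
  case base
  show ?case
  proof (intro allI impI)
    fix S E :: "complex set"
    assume "finite E"
    have "tabp 3 ` {v. validp 3 S E v} \<subseteq> B3 ` E"
    proof
      fix T assume "T \<in> tabp 3 ` {v. validp 3 S E v}"
      then obtain v where "validp 3 S E v" "T = tabp 3 v" by auto
      moreover then have "det2 (v 0) (v 2) \<in> E" unfolding validp_def by simp
      ultimately show "T \<in> B3 ` E" using base3 by auto
    qed
    then show "finite (tabp 3 ` {v. validp 3 S E v})" using \<open>finite E\<close> by (meson finite_imageI finite_subset)
  qed
next
  case (Suc m)
  show ?case
  proof (intro allI impI)
    fix S E :: "complex set"
    assume S0: "0 \<notin> S" and lf: "locfin S" and fE: "finite E"
    define B where "B = (\<Sum>e\<in>E. cmod e)"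
    define X where "X = S \<inter> cball 0 (2 + B)"
    have fX: "finite X" using lf unfolding X_def locfin_def by blast
    have IH: "finite (tabp m ` {u. validp m (Sx S x) (ExS E x) u})" if "x \<in> X" for x
    proof -
      have "x \<noteq> 0" using that S0 unfolding X_def by auto
      then show ?thesis using Suc.IH zero_Sx[OF S0] locfin_Sx[OF lf] finite_ExS[OF fE] by blast
    qed
    have sub: "tabp (Suc m) ` {v. validp (Suc m) S E v} \<subseteq>
       (\<Union>k\<in>{1..m}. \<Union>x\<in>X. recon m k x ` (tabp m ` {u. validp m (Sx S x) (ExS E x) u}))"
    proof
      fix T assume "T \<in> tabp (Suc m) ` {v. validp (Suc m) S E v}"
      then obtain v where V: "validp (Suc m) S E v" and T: "T = tabp (Suc m) v" by auto
      from growth[OF V] Suc.hyps obtain k where k: "1 \<le> k" "k + 2 \<le> Suc m"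
        and sm: "cmod (det2 (v (k-1)) (v (k+1))) < 2 + cmod (det2 (v 0) (v (Suc m - 1)))" by auto
      define x where "x = det2 (v (k-1)) (v (k+1))"
      have eps: "det2 (v 0) (v (Suc m - 1)) \<in> E" using V unfolding validp_def by blast
      then have "cmod (det2 (v 0) (v (Suc m - 1))) \<le> B" unfolding B_def
        using fE by (intro member_le_sum) auto
      then have xb: "cmod x \<le> 2 + B" using sm unfolding x_def by simp
      have dia: "\<And>i j. i + 2 \<le> j \<Longrightarrow> j < Suc m \<Longrightarrow> \<not> (i = 0 \<and> j = m) \<Longrightarrow> det2 (v i) (v j) \<in> S"
        using V unfolding validp_def by auto
      have xS: "x \<in> S" unfolding x_def using k Suc.hyps by (intro dia) auto
      have xX: "x \<in> X" using xS xb unfolding X_def by simp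
      have x0: "x \<noteq> 0" using xS S0 by auto
      have k': "k + 1 \<le> m" using k by simp
      have "validp m (Sx S x) (ExS E x) (red k x v)"
        using red_valid[OF V Suc.hyps k(1) k' x_def x0] .
      moreover have "T = recon m k x (tabp m (red k x v))"
        using red_recon[OF V Suc.hyps k(1) k' x_def x0] T by simp
      moreover have "k \<in> {1..m}" using k by simp
      ultimately show "T \<in> (\<Union>k\<in>{1..m}. \<Union>x\<in>X. recon m k x ` (tabp m ` {u. validp m (Sx S x) (ExS E x) u}))"
        using xX by blast
    qed
    have "finite (\<Union>k\<in>{1..m}. \<Union>x\<in>X. recon m k x ` (tabp m ` {u. validp m (Sx S x) (ExS E x) u}))"
      using fX IH by (intro finite_UN_I) auto
    then show "finite (tabp (Suc m) ` {v. validp (Suc m) S E v})" using sub finite_subset by blast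
  qed
qed



locale frz =
  fixes n :: nat and S :: "complex set" and c :: "int \<Rightarrow> int \<Rightarrow> complex"
  assumes F: "c \<in> friezes n S" and S0: "0 \<notin> S"
begin

lemma bd: "c i i = 0" "c i (i + int n + 3) = 0" "c i (i + 1) = 1" "c i (i + int n + 2) = 1"
  using F unfolding friezes_def is_frieze_def by auto

lemma inS: "i + 2 \<le> j \<Longrightarrow> j \<le> i + int n + 1 \<Longrightarrow> c i j \<in> S"
  using F unfolding friezes_def is_frieze_def by auto

lemma outside: "\<not> (i \<le> j \<and> j \<le> i + int n + 3) \<Longrightarrow> c i j = 0"
  using F unfolding friezes_def frieze_dom_def by auto

lemma dt: "i + 1 \<le> j \<Longrightarrow> j \<le> i + int n + 2 \<Longrightarrow> c i j * c (i+1) (j+1) - c i (j+1) * c (i+1) j = 1"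
  using F unfolding friezes_def is_frieze_def frieze_dom_def by auto

lemma nz: "i + 1 \<le> j \<Longrightarrow> j \<le> i + int n + 2 \<Longrightarrow> c i j \<noteq> 0"
proof -
  assume a: "i + 1 \<le> j" "j \<le> i + int n + 2"
  show ?thesis
  proof (cases "j = i + 1 \<or> j = i + int n + 2")
    case True then show ?thesis using bd by auto
  next
    case False
    then have "c i j \<in> S" using a by (intro inS) auto
    then show ?thesis using S0 by auto
  qed
qed

lemma RR_aux: "int t \<le> int n + 1 \<Longrightarrow> i = j - 1 - int t \<Longrightarrow> c i (j-1) + c i (j+1) = c (j-1) (j+1) * c i j"
proof (induction t arbitrary: i)
  case 0
  then have "c i (j-1) = 0" "c i j = 1" using bd[of i] by auto
  then show ?case using 0 by simp
next
  case (Suc t)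
  define a where "a = c (j-1) (j+1)"
  have h: "int t \<le> int n + 1" "i + 1 = j - 1 - int t" using Suc.prems by auto
  have IH: "c (i+1) (j-1) + c (i+1) (j+1) = a * c (i+1) j" unfolding a_def by (rule Suc.IH[OF h])
  have D1: "c i j * c (i+1) (j+1) - c i (j+1) * c (i+1) j = 1" using Suc.prems by (intro dt) auto
  have D2: "c i (j-1) * c (i+1) j - c i j * c (i+1) (j-1) = 1"
    using dt[of i "j-1"] Suc.prems by auto
  have q: "c (i+1) j \<noteq> 0" using Suc.prems by (intro nz) auto
  have "c (i+1) j * (c i (j-1) + c i (j+1)) = c i j * (c (i+1) (j-1) + c (i+1) (j+1))"
    using D1 D2 by algebra
  then have "c (i+1) j * (c i (j-1) + c i (j+1)) = c (i+1) j * (a * c i j)" unfolding IH by (simp add: algebra_simps)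
  then show ?case using q unfolding a_def by simp
qed

lemma RR: "i + 1 \<le> j \<Longrightarrow> j \<le> i + int n + 2 \<Longrightarrow> c i (j-1) + c i (j+1) = c (j-1) (j+1) * c i j"
  using RR_aux[of "nat (j - 1 - i)" i j] by auto

lemma CR_aux: "int t \<le> int n + 1 \<Longrightarrow> j = i + 1 + int t \<Longrightarrow> c (i-1) j + c (i+1) j = c (i-1) (i+1) * c i j"
proof (induction t arbitrary: j)
  case 0
  then have "c (i+1) j = 0" "c i j = 1" using bd[of i] bd[of "i+1"] by auto
  then show ?case using 0 by simp
next
  case (Suc t)
  define a where "a = c (i-1) (i+1)"
  define j' where "j' = j - 1"
  have jj: "j = j' + 1" unfolding j'_def by simp
  have h: "int t \<le> int n + 1" "j' = i + 1 + int t" using Suc.prems unfolding j'_def by auto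
  have IH: "c (i-1) j' + c (i+1) j' = a * c i j'" unfolding a_def by (rule Suc.IH[OF h])
  have D1: "c (i-1) j' * c i (j'+1) - c (i-1) (j'+1) * c i j' = 1"
    using dt[of "i-1" j'] Suc.prems unfolding j'_def by auto
  have D2: "c i j' * c (i+1) (j'+1) - c i (j'+1) * c (i+1) j' = 1"
    using dt[of i j'] Suc.prems unfolding j'_def by auto
  have q: "c i j' \<noteq> 0" using Suc.prems unfolding j'_def by (intro nz) auto
  have "c i (j'+1) * (c (i-1) j' + c (i+1) j') = c i j' * (c (i-1) (j'+1) + c (i+1) (j'+1))"
    using D1 D2 by algebra
  then have "c i j' * (c (i-1) (j'+1) + c (i+1) (j'+1)) = c i j' * (a * c i (j'+1))" unfolding IH by (simp add: algebra_simps)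
  then show ?case using q unfolding a_def jj by simp
qed

lemma CR: "i + 1 \<le> j \<Longrightarrow> j \<le> i + int n + 2 \<Longrightarrow> c (i-1) j + c (i+1) j = c (i-1) (i+1) * c i j"
  using CR_aux[of "nat (j - i - 1)" j i] by auto

lemma L_aux: "j \<le> int n + 2 \<Longrightarrow> (1 + int t \<le> j \<longrightarrow> c (1 + int t) j = c 0 (1 + int t) * c 1 j - c 1 (1 + int t) * c 0 j)
   \<and> (2 + int t \<le> j \<longrightarrow> c (2 + int t) j = c 0 (2 + int t) * c 1 j - c 1 (2 + int t) * c 0 j)"
proof (induction t)
  case 0
  have "c 0 1 = 1" "c 1 1 = 0" "c 1 2 = 1" using bd[of 0] bd[of 1] by auto
  moreover have "2 \<le> j \<Longrightarrow> c 0 j + c 2 j = c 0 2 * c 1 j" using CR[of 1 j] 0 by simp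
  ultimately show ?case by (auto simp: algebra_simps)
next
  case (Suc t)
  have e1: "1 + int (Suc t) = 2 + int t" "2 + int (Suc t) = 3 + int t" by auto
  define a where "a = c (1 + int t) (3 + int t)"
  have r0: "c 0 (1 + int t) + c 0 (3 + int t) = a * c 0 (2 + int t)" if "3 + int t \<le> j"
    using RR[of 0 "2 + int t"] that Suc.prems unfolding a_def by (simp add: algebra_simps)
  have r1: "c 1 (1 + int t) + c 1 (3 + int t) = a * c 1 (2 + int t)" if "3 + int t \<le> j"
    using RR[of 1 "2 + int t"] that Suc.prems unfolding a_def by (simp add: algebra_simps)
  have cr: "c (1 + int t) j + c (3 + int t) j = a * c (2 + int t) j" if "3 + int t \<le> j"
    using CR[of "2 + int t" j] that Suc.prems unfolding a_def by (simp add: algebra_simps)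
  show ?case unfolding e1
  proof (intro conjI impI)
    assume "2 + int t \<le> j" then show "c (2 + int t) j = c 0 (2 + int t) * c 1 j - c 1 (2 + int t) * c 0 j"
      using Suc.IH Suc.prems by auto
  next
    assume h: "3 + int t \<le> j"
    then have i1: "c (1 + int t) j = c 0 (1 + int t) * c 1 j - c 1 (1 + int t) * c 0 j"
      and i2: "c (2 + int t) j = c 0 (2 + int t) * c 1 j - c 1 (2 + int t) * c 0 j"
      using Suc.IH Suc.prems by auto
    have "c (3 + int t) j = a * c (2 + int t) j - c (1 + int t) j" using cr[OF h] by (simp add: algebra_simps)
    also have "\<dots> = c 1 j * (a * c 0 (2 + int t) - c 0 (1 + int t)) - c 0 j * (a * c 1 (2 + int t) - c 1 (1 + int t))"
      unfolding i1 i2 by (simp add: algebra_simps)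
    also have "\<dots> = c 0 (3 + int t) * c 1 j - c 1 (3 + int t) * c 0 j"
    proof -
      have "a * c 0 (2 + int t) - c 0 (1 + int t) = c 0 (3 + int t)"
        by (simp only: r0[OF h, symmetric] add_diff_cancel_left')
      moreover have "a * c 1 (2 + int t) - c 1 (1 + int t) = c 1 (3 + int t)"
        by (simp only: r1[OF h, symmetric] add_diff_cancel_left')
      ultimately show ?thesis by (simp add: algebra_simps)
    qed
    finally show "c (3 + int t) j = c 0 (3 + int t) * c 1 j - c 1 (3 + int t) * c 0 j" .
  qed
qed

lemma L: "1 \<le> i \<Longrightarrow> i \<le> j \<Longrightarrow> j \<le> int n + 2 \<Longrightarrow> c i j = c 0 i * c 1 j - c 1 i * c 0 j"
  using L_aux[of j "nat (i - 1)"] by auto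

definition V :: "nat \<Rightarrow> complex \<times> complex" where
  "V j = (if j = 0 then (1, 0) else (- c 1 (int j), c 0 (int j)))"

lemma Vdet: "i \<le> j \<Longrightarrow> j < n + 3 \<Longrightarrow> det2 (V i) (V j) = c (int i) (int j)"
proof -
  assume a: "i \<le> j" "j < n + 3"
  show ?thesis
  proof (cases "i = 0")
    case True then show ?thesis using bd[of 0] by (simp add: V_def det2_def)
  next
    case False
    then have "c (int i) (int j) = c 0 (int i) * c 1 (int j) - c 1 (int i) * c 0 (int j)"
      using a by (intro L) auto
    then show ?thesis using False a by (simp add: V_def det2_def algebra_simps)
  qed
qed

lemma V_valid: "validp (n + 3) S {1} V"
  unfolding validp_def
proof (intro conjI allI impI)
  fix j assume "Suc j < n + 3"
  moreover have "c (int j) (1 + int j) = 1" using bd(3)[of "int j"] by (simp add: add.commute)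
  ultimately show "det2 (V j) (V (Suc j)) = 1" using Vdet[of j "Suc j"] by simp
next
  have "c 0 (2 + int n) = 1" using bd(4)[of 0] by (simp add: add.commute)
  then show "det2 (V 0) (V (n + 3 - 1)) \<in> {1}" using Vdet[of 0 "n+2"] by simp
next
  fix i j assume h: "i + 2 \<le> j \<and> j < n + 3 \<and> \<not> (i = 0 \<and> j = n + 3 - 1)"
  then have "c (int i) (int j) \<in> S" by (intro inS) auto
  then show "det2 (V i) (V j) \<in> S" using Vdet[of i j] h by simp
qed

end

lemma frz_fwd:
  assumes "frz n S c" "frz n S c'" "\<forall>j. c i j = c' i j"
  shows "c (i+1) j = c' (i+1) j"
proof -
  interpret A: frz n S c by (rule assms(1))
  interpret B: frz n S c' by (rule assms(2))
  have step: "c (i+1) (i+1+int t) = c' (i+1) (i+1+int t)" for t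
  proof (induction t)
    case 0 then show ?case using A.bd B.bd by simp
  next
    case (Suc t)
    show ?case
    proof (cases "int t + 1 \<le> int n + 2")
      case True
      have d1: "c i (i+1+int t) * c (i+1) (i+1+int t+1) - c i (i+1+int t+1) * c (i+1) (i+1+int t) = 1"
        using True by (intro A.dt) auto
      have d2: "c' i (i+1+int t) * c' (i+1) (i+1+int t+1) - c' i (i+1+int t+1) * c' (i+1) (i+1+int t) = 1"
        using True by (intro B.dt) auto
      have q: "c i (i+1+int t) \<noteq> 0" using True by (intro A.nz) auto
      have "c i (i+1+int t) * c (i+1) (i+1+int t+1) = c i (i+1+int t) * c' (i+1) (i+1+int t+1)"
        using d1 d2 Suc assms(3) by (simp add: algebra_simps)
      then show ?thesis using q by (simp add: add.assoc)
    next
      case False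
      then have "int t + 1 = int n + 3 \<or> int t + 1 > int n + 3" by auto
      then show ?thesis
      proof
        assume "int t + 1 = int n + 3"
        then have e: "i + 1 + int (Suc t) = (i+1) + int n + 3" by simp
        show ?thesis unfolding e by (simp only: A.bd(2) B.bd(2))
      next
        assume "int t + 1 > int n + 3"
        then show ?thesis using A.outside B.outside by simp
      qed
    qed
  qed
  show ?thesis
  proof (cases "j < i + 1")
    case True then show ?thesis using A.outside B.outside by simp
  next
    case False
    then have "j = i + 1 + int (nat (j - i - 1))" by simp
    then show ?thesis using step by metis
  qed
qed

lemma frz_bwd:
  assumes "frz n S c" "frz n S c'" "\<forall>j. c i j = c' i j"
  shows "c (i-1) j = c' (i-1) j"
proof -
  interpret A: frz n S c by (rule assms(1))
  interpret B: frz n S c' by (rule assms(2))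
  have step: "c (i-1) (i+int n+2-int t) = c' (i-1) (i+int n+2-int t)" for t
  proof (induction t)
    case 0 then show ?case using A.bd[of "i-1"] B.bd[of "i-1"] by (simp add: algebra_simps)
  next
    case (Suc t)
    define j where "j = i + int n + 2 - int (Suc t)"
    have j1: "j + 1 = i + int n + 2 - int t" unfolding j_def by simp
    show ?case unfolding j_def[symmetric]
    proof (cases "i \<le> j")
      case True
      have jb: "j \<le> i + int n + 1" unfolding j_def by simp
      have d1: "c (i-1) j * c (i-1+1) (j+1) - c (i-1) (j+1) * c (i-1+1) j = 1"
        using True jb by (intro A.dt) auto
      have d2: "c' (i-1) j * c' (i-1+1) (j+1) - c' (i-1) (j+1) * c' (i-1+1) j = 1"
        using True jb by (intro B.dt) auto
      have q: "c i (j+1) \<noteq> 0" using True jb by (intro A.nz) auto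
      have "c (i-1) j * c i (j+1) = c' (i-1) j * c i (j+1)"
        using d1 d2 Suc assms(3) unfolding j1[symmetric] by (simp add: algebra_simps)
      then show "c (i-1) j = c' (i-1) j" using q by simp
    next
      case False
      show "c (i-1) j = c' (i-1) j"
      proof (cases "j = i - 1")
        case True then show ?thesis using A.bd B.bd by simp
      next
        case False
        then show ?thesis using \<open>\<not> i \<le> j\<close> A.outside B.outside by simp
      qed
    qed
  qed
  show ?thesis
  proof (cases "j > i + int n + 2")
    case True then show ?thesis using A.outside B.outside by simp
  next
    case False
    then have "j = i + int n + 2 - int (nat (i + int n + 2 - j))" by simp
    then show ?thesis using step by metis
  qed
qed

lemma frz_eq:
  assumes "frz n S c" "frz n S c'" "\<forall>j. c 0 j = c' 0 j"
  shows "c = c'"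
proof -
  have "\<forall>j. c i j = c' i j" for i
  proof (induction i rule: int_induct[where k = 0])
    case base then show ?case using assms by simp
  next
    case (step1 i) then show ?case using frz_fwd[OF assms(1,2)] by blast
  next
    case (step2 i) then show ?case using frz_bwd[OF assms(1,2)] by blast
  qed
  then show ?thesis by (intro ext) auto
qed

theorem friezes_finite:
  assumes S0: "0 \<notin> S" and lf: "locfin S"
  shows "finite (friezes n S)"
proof -
  define G where "G c = tabp (n+3) (frz.V c)" for c :: "int \<Rightarrow> int \<Rightarrow> complex"
  have fr: "c \<in> friezes n S \<Longrightarrow> frz n S c" for c using S0 by unfold_locales
  have "inj_on G (friezes n S)"
  proof (rule inj_onI)
    fix c c' assume c: "c \<in> friezes n S" and c': "c' \<in> friezes n S" and e: "G c = G c'"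
    interpret A: frz n S c using fr[OF c] .
    interpret B: frz n S c' using fr[OF c'] .
    have "c 0 j = c' 0 j" for j
    proof (cases "0 \<le> j \<and> j < int n + 3")
      case True
      then obtain k where k: "j = int k" "k < n + 3" by (metis nat_0_le nat_less_iff of_nat_add of_nat_numeral)
      have "G c 0 k = G c' 0 k" using e by simp
      then have "det2 (A.V 0) (A.V k) = det2 (B.V 0) (B.V k)" using k unfolding G_def tabp_def by simp
      then show ?thesis using A.Vdet[of 0 k] B.Vdet[of 0 k] k by simp
    next
      case False
      then have "j = int n + 3 \<or> \<not> (0 \<le> j \<and> j \<le> 0 + int n + 3)" by auto
      then show ?thesis using A.bd[of 0] B.bd[of 0] A.outside B.outside by auto
    qed
    then show "c = c'" using frz_eq[OF fr[OF c] fr[OF c']] by blast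
  qed
  moreover have "G ` friezes n S \<subseteq> tabp (n+3) ` {v. validp (n+3) S {1} v}"
  proof
    fix T assume "T \<in> G ` friezes n S"
    then obtain c where c: "c \<in> friezes n S" "T = G c" by auto
    interpret A: frz n S c using fr[OF c(1)] .
    show "T \<in> tabp (n+3) ` {v. validp (n+3) S {1} v}" using c A.V_valid unfolding G_def by auto
  qed
  moreover have "finite (tabp (n+3) ` {v. validp (n+3) S {1} v})"
    using poly_finite[of "n+3"] S0 lf by simp
  ultimately show ?thesis by (meson finite_imageD finite_subset)
qed



lemma mp_add: "map_poly (of_int::int\<Rightarrow>complex) (p+q) = map_poly of_int p + map_poly of_int q"
  by (intro poly_eqI) (simp add: coeff_map_poly)
lemma mp_diff: "map_poly (of_int::int\<Rightarrow>complex) (p-q) = map_poly of_int p - map_poly of_int q"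
  by (intro poly_eqI) (simp add: coeff_map_poly)
lemma mp_mult: "map_poly (of_int::int\<Rightarrow>complex) (p*q) = map_poly of_int p * map_poly of_int q"
  by (intro poly_eqI) (simp add: coeff_map_poly coeff_mult)
lemma mp_const: "map_poly (of_int::int\<Rightarrow>complex) [:k:] = [:of_int k:]"
  by (intro poly_eqI) (simp add: coeff_map_poly coeff_pCons split: nat.splits)
lemma mp_X: "map_poly (of_int::int\<Rightarrow>complex) [:0,1:] = [:0,1:]"
  by (intro poly_eqI) (simp add: coeff_map_poly coeff_pCons split: nat.splits)

lemma Rmem: "x \<in> int_adjoin z \<longleftrightarrow> (\<exists>p. x = poly (map_poly of_int p) z)"
  unfolding int_adjoin_def by auto

lemma R_add: "x \<in> int_adjoin z \<Longrightarrow> y \<in> int_adjoin z \<Longrightarrow> x + y \<in> int_adjoin z"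
  unfolding Rmem by (metis mp_add poly_add)
lemma R_diff: "x \<in> int_adjoin z \<Longrightarrow> y \<in> int_adjoin z \<Longrightarrow> x - y \<in> int_adjoin z"
  unfolding Rmem by (metis mp_diff poly_diff)
lemma R_mult: "x \<in> int_adjoin z \<Longrightarrow> y \<in> int_adjoin z \<Longrightarrow> x * y \<in> int_adjoin z"
  unfolding Rmem by (metis mp_mult poly_mult)
lemma R_int: "of_int k \<in> int_adjoin z"
  unfolding Rmem by (rule exI[of _ "[:k:]"]) (simp add: mp_const)
lemma R_z: "z \<in> int_adjoin z"
  unfolding Rmem by (rule exI[of _ "[:0,1:]"]) (simp add: mp_X)
lemma R_0: "0 \<in> int_adjoin z" using R_int[of 0] by simp
lemma R_1: "1 \<in> int_adjoin z" using R_int[of 1] by simp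
lemma R_uminus: "x \<in> int_adjoin z \<Longrightarrow> - x \<in> int_adjoin z" using R_diff[OF R_0] by fastforce
lemma R_pow: "x \<in> int_adjoin z \<Longrightarrow> x ^ k \<in> int_adjoin z"
  by (induction k) (auto intro: R_1 R_mult)
lemma R_sum: "(\<And>i. i \<in> A \<Longrightarrow> f i \<in> int_adjoin z) \<Longrightarrow> sum f A \<in> int_adjoin z"
  by (induction A rule: infinite_finite_induct) (auto intro: R_0 R_add)

section \<open>Lattice case\<close>

lemma R_form:
  assumes zt: "z^2 = of_int t * z - 1"
  shows "x \<in> int_adjoin z \<Longrightarrow> \<exists>a b :: int. x = of_int a + of_int b * z"
proof -
  have "\<exists>a b :: int. poly (map_poly of_int p) z = of_int a + of_int b * z" for p :: "int poly"
  proof (induction p)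
    case 0 then show ?case by (intro exI[of _ 0]) simp
  next
    case (pCons c p)
    then obtain a b :: int where ab: "poly (map_poly of_int p) z = of_int a + of_int b * z" by blast
    have "poly (map_poly of_int (pCons c p)) z = of_int c + z * (of_int a + of_int b * z)"
      by (simp add: map_poly_pCons ab)
    also have "\<dots> = of_int c + of_int a * z + of_int b * z^2" by (simp add: algebra_simps power2_eq_square)
    also have "\<dots> = of_int (c - b) + of_int (a + b * t) * z" unfolding zt by (simp add: algebra_simps)
    finally show ?case by blast
  qed
  then show "x \<in> int_adjoin z \<Longrightarrow> ?thesis" unfolding Rmem by blast
qed

lemma norm_form:
  assumes zt: "z^2 = of_int t * z - 1" and z1: "cmod z = 1"
  shows "(cmod (of_int a + of_int b * z))^2 = of_int (a^2 + t*a*b + b^2)"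
proof -
  have zc: "z * cnj z = 1" using complex_norm_square[of z] z1 by simp
  have z0: "z \<noteq> 0" using z1 by auto
  have "cnj z = inverse z" using zc z0 by (simp add: field_simps)
  then have sum: "z + cnj z = of_int t"
  proof -
    have "z * z = of_int t * z - 1" using zt by (simp add: power2_eq_square)
    then have "z = of_int t - inverse z" using z0 by (simp add: field_simps)
    then have "z + inverse z = of_int t" by (simp only: eq_diff_eq)
    then show ?thesis using \<open>cnj z = inverse z\<close> by simp
  qed
  let ?x = "of_int a + of_int b * z :: complex"
  have "complex_of_real ((cmod ?x)^2) = ?x * cnj ?x" by (rule complex_norm_square)
  also have "\<dots> = of_int a * of_int a + of_int a * of_int b * (z + cnj z) + of_int b * of_int b * (z * cnj z)"
    by (simp add: algebra_simps)
  also have "\<dots> = of_int (a^2 + t*a*b + b^2)" unfolding sum zc by (simp add: power2_eq_square)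
  finally have "complex_of_real ((cmod ?x)^2) = complex_of_real (of_int (a^2 + t*a*b + b^2))" by simp
  then show ?thesis using of_real_eq_iff by blast
qed

lemma norm_ge1:
  assumes zt: "z^2 = of_int t * z - 1" and z1: "cmod z = 1"
  shows "x \<in> int_adjoin z \<Longrightarrow> x \<noteq> 0 \<Longrightarrow> 1 \<le> cmod x"
proof -
  assume x: "x \<in> int_adjoin z" "x \<noteq> 0"
  then obtain a b :: int where ab: "x = of_int a + of_int b * z" using R_form[OF zt] by blast
  have "(cmod x)^2 = of_int (a^2 + t*a*b + b^2)" using norm_form[OF zt z1] ab by simp
  moreover have "0 < (cmod x)^2" using x by simp
  ultimately have "0 < real_of_int (a^2 + t*a*b + b^2)" by (simp only:)
  then have "0 < a^2 + t*a*b + b^2" using of_int_0_less_iff by blast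
  then have "1 \<le> real_of_int (a^2 + t*a*b + b^2)" by linarith
  then have "1 \<le> (cmod x)^2" using \<open>(cmod x)^2 = _\<close> by simp
  then show "1 \<le> cmod x" using power2_nonneg_ge_1_iff[of "cmod x"] by simp
qed

context
  fixes z :: complex
  assumes ge1: "\<And>x. x \<in> int_adjoin z \<Longrightarrow> x \<noteq> 0 \<Longrightarrow> 1 \<le> cmod x"
begin

lemma R_ud: "uniform_discrete (int_adjoin z)"
proof (rule uniformI1[of 1])
  fix x y assume "x \<in> int_adjoin z" "y \<in> int_adjoin z" "dist x y < 1"
  then have "x - y \<in> int_adjoin z" "cmod (x - y) < 1" by (auto intro: R_diff simp: dist_norm)
  then show "x = y" using ge1 by force
qed simp

lemma R_discrete: "discrete (int_adjoin z)"
  using R_ud uniform_discrete_imp_discrete by blast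

lemma R_locfin: "locfin (int_adjoin z - {0})"
  unfolding locfin_def
proof
  fix r
  have "uniform_discrete ((int_adjoin z - {0}) \<inter> cball 0 r)" using R_ud by (rule uniform_discrete_subset) blast
  moreover have "bounded ((int_adjoin z - {0}) \<inter> cball 0 r)" by (meson Int_lower2 bounded_cball bounded_subset)
  ultimately show "finite ((int_adjoin z - {0}) \<inter> cball 0 r)" using uniform_discrete_finite_iff by blast
qed

lemma R_units_finite: "finite (units_in (int_adjoin z))"
proof -
  have "units_in (int_adjoin z) \<subseteq> int_adjoin z \<inter> cball 0 1"
  proof
    fix u assume "u \<in> units_in (int_adjoin z)"
    then obtain v where uv: "u \<in> int_adjoin z" "v \<in> int_adjoin z" "u * v = 1" unfolding units_in_def by auto
    then have "u \<noteq> 0" "v \<noteq> 0" by auto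
    then have "1 \<le> cmod u" "1 \<le> cmod v" using ge1 uv by auto
    moreover have "cmod u * cmod v = 1" using uv by (metis norm_mult norm_one)
    ultimately have "cmod u \<le> 1" using mult_left_mono[of 1 "cmod v" "cmod u"] by simp
    then show "u \<in> int_adjoin z \<inter> cball 0 1" using uv by simp
  qed
  moreover have "finite (int_adjoin z \<inter> cball 0 1)"
  proof -
    have "uniform_discrete (int_adjoin z \<inter> cball 0 1)" using R_ud by (rule uniform_discrete_subset) blast
    moreover have "bounded (int_adjoin z \<inter> cball 0 1)" by (meson Int_lower2 bounded_cball bounded_subset)
    ultimately show ?thesis using uniform_discrete_finite_iff by blast
  qed
  ultimately show ?thesis by (rule finite_subset)
qed

end



lemma unit_geom:
  assumes w: "w \<in> int_adjoin z" and kl: "1 \<le> k" "w ^ (k * l) = w" and w1: "w \<noteq> 1"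
    and wk: "w ^ k \<noteq> w" "w ^ (k+1) \<noteq> 1" and cw: "cmod w = 1"
  shows "\<exists>u\<in>units_in (int_adjoin z). cmod u \<noteq> 1"
proof -
  define u where "u = (\<Sum>j<k. w ^ j)"
  define v where "v = (\<Sum>j<l. (w ^ k) ^ j)"
  have uR: "u \<in> int_adjoin z" unfolding u_def by (intro R_sum R_pow w)
  have vR: "v \<in> int_adjoin z" unfolding v_def by (intro R_sum R_pow w)
  have e1: "1 - w ^ k = (1 - w) * u" unfolding u_def by (rule one_diff_power_eq)
  have e2: "1 - (w ^ k) ^ l = (1 - w ^ k) * v" unfolding v_def by (rule one_diff_power_eq)
  have "(w ^ k) ^ l = w" using kl by (simp add: power_mult)
  have "(1 - w) * (u * v) = (1 - w ^ k) * v" unfolding e1 by (simp add: mult.assoc)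
  also have "\<dots> = 1 - w" unfolding e2[symmetric] \<open>(w ^ k) ^ l = w\<close> ..
  finally have "1 - w = (1 - w) * (u * v)" by simp
  then have uv: "u * v = 1" using w1 by simp
  have "cmod u \<noteq> 1"
  proof
    assume u1: "cmod u = 1"
    define a where "a = w ^ k"
    have ca: "cmod a = 1" unfolding a_def using cw by (simp add: norm_power)
    have "cmod (1 - a) = cmod (1 - w)" unfolding a_def e1 using u1 by (simp add: norm_mult)
    then have "(cmod (1 - a))^2 = (cmod (1 - w))^2" by simp
    then have "(1 - Re a)^2 + (Im a)^2 = (1 - Re w)^2 + (Im w)^2" by (simp add: cmod_power2)
    moreover have "(Re a)^2 + (Im a)^2 = 1" "(Re w)^2 + (Im w)^2 = 1" using ca cw
      by (simp_all add: cmod_power2[symmetric])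
    ultimately have re: "Re a = Re w" by (simp add: power2_eq_square algebra_simps)
    then have "(Im a)^2 = (Im w)^2" using \<open>(Re a)^2 + (Im a)^2 = 1\<close> \<open>(Re w)^2 + (Im w)^2 = 1\<close> by simp
    then have "Im a = Im w \<or> Im a = - Im w" using power2_eq_iff by blast
    then show False
    proof
      assume "Im a = Im w"
      then have "a = w" using re by (simp add: complex_eq_iff)
      then show False using wk(1) unfolding a_def by simp
    next
      assume "Im a = - Im w"
      then have "a = cnj w" using re by (simp add: complex_eq_iff)
      then have "a * w = 1" using complex_norm_square[of w] cw by (simp add: mult.commute)
      then show False using wk(2) unfolding a_def by (simp add: mult.commute)
    qed
  qed
  then show ?thesis using uR vR uv unfolding units_in_def by blast
qed

lemma prim_basic:
  assumes "primitive_root_unity d z"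
  shows "d > 0" "z ^ d = 1" "\<And>k. 0 < k \<Longrightarrow> k < d \<Longrightarrow> z ^ k \<noteq> 1" "cmod z = 1" "z \<noteq> 0"
proof -
  show d: "d > 0" "z ^ d = 1" "\<And>k. 0 < k \<Longrightarrow> k < d \<Longrightarrow> z ^ k \<noteq> 1"
    using assms unfolding primitive_root_unity_def by auto
  have "cmod z ^ d = 1 ^ d" using d by (metis norm_one norm_power power_one)
  then show c: "cmod z = 1" using d(1) power_eq_imp_eq_base by (metis norm_ge_zero zero_le_one)
  then show "z \<noteq> 0" by auto
qed

lemma bad_unit:
  assumes P: "primitive_root_unity d z" and nd: "d \<notin> {1, 2, 3, 4, 6}"
  shows "\<exists>u\<in>units_in (int_adjoin z). cmod u \<noteq> 1"
proof -
  note pb = prim_basic[OF P]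
  have nd': "d \<noteq> 1" "d \<noteq> 2" "d \<noteq> 3" "d \<noteq> 4" "d \<noteq> 6" using nd by auto
  have z1: "z \<noteq> 1" using pb(3)[of 1] nd pb(1) by (cases "d = 1") auto
  have "odd d \<or> d mod 4 = 2 \<or> d mod 4 = 0" by presburger
  then consider (c_odd) "odd d" | (c_two) "d mod 4 = 2" | (c_zero) "d mod 4 = 0" by (elim disjE) auto
  then show ?thesis
  proof cases
    case c_odd
    then have d5: "5 \<le> d" using c_odd nd' pb(1) by presburger
    define l where "l = (d + 1) div 2"
    have "2 * l = d + 1" unfolding l_def using c_odd by presburger
    then have "z ^ (2 * l) = z" using pb(2) by simp
    moreover have "z ^ 2 \<noteq> z"
    proof
      assume "z ^ 2 = z" then have "z * (z - 1) = 0" by (simp add: power2_eq_square algebra_simps)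
      then show False using z1 pb(5) by simp
    qed
    moreover have "z ^ (2+1) \<noteq> 1" using pb(3)[of 3] d5 by simp
    ultimately show ?thesis using unit_geom[OF R_z, where k=2 and l=l] z1 pb(4) by simp
  next
    case c_two
    define e where "e = d div 2"
    have de: "d = 2 * e" "odd e" unfolding e_def using c_two by presburger+
    have e5: "5 \<le> e" using de nd' c_two by presburger
    have "(z ^ e)^2 = 1" using pb(2) de by (simp add: power_mult[symmetric] mult.commute)
    then have "z ^ e = 1 \<or> z ^ e = -1" using power2_eq_1_iff by blast
    moreover have "z ^ e \<noteq> 1" using pb(3)[of e] de e5 by simp
    ultimately have ze: "z ^ e = -1" by simp
    define w where "w = - z"
    have wR: "w \<in> int_adjoin z" unfolding w_def by (intro R_uminus R_z)
    have we: "w ^ e = 1" unfolding w_def using ze de(2) by (simp add: power_minus_odd)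
    define l where "l = (e + 1) div 2"
    have "2 * l = e + 1" unfolding l_def using de by presburger
    then have "w ^ (2 * l) = w" using we by simp
    moreover have w1: "w \<noteq> 1"
    proof
      assume "w = 1" then have "z = -1" unfolding w_def by (metis minus_minus)
      then have "z ^ 2 = 1" by simp
      then show False using pb(3)[of 2] de e5 by simp
    qed
    moreover have "w ^ 2 \<noteq> w"
    proof
      assume "w ^ 2 = w" then have "w * (w - 1) = 0" by (simp add: power2_eq_square algebra_simps)
      then show False using w1 pb(5) unfolding w_def by simp
    qed
    moreover have "w ^ (2+1) \<noteq> 1"
    proof
      assume "w ^ (2+1) = 1"
      then have "- (z ^ 3) = 1" unfolding w_def by (simp add: power_minus_odd)
      then have z3: "z ^ 3 = -1" by (metis minus_minus)
      have "z ^ 6 = (z ^ 3) ^ 2" by (simp flip: power_mult)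
      then have "z ^ 6 = 1" using z3 by simp
      then show False using pb(3)[of 6] de e5 by simp
    qed
    moreover have "cmod w = 1" unfolding w_def using pb(4) by simp
    ultimately show ?thesis using unit_geom[OF wR, where k=2 and l=l] by simp
  next
    case c_zero
    define t where "t = d div 4"
    have dt: "d = 4 * t" unfolding t_def using c_zero by presburger
    have t2: "2 \<le> t" using dt nd' pb(1) by presburger
    define k where "k = 2 * t - 1"
    have kk: "k * k = d * (t - 1) + 1" unfolding k_def dt using t2
    proof -
      obtain s where s: "t = s + 2" using t2 by (metis add.commute le_add_diff_inverse)
      show "(2 * t - 1) * (2 * t - 1) = 4 * t * (t - 1) + 1" unfolding s by (simp add: algebra_simps)
    qed
    have "z ^ (k * k) = (z ^ d) ^ (t - 1) * z" unfolding kk by (simp add: power_add power_mult)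
    then have "z ^ (k * k) = z" using pb(2) by simp
    moreover have "z ^ k \<noteq> z"
    proof
      assume "z ^ k = z"
      moreover have "0 < k" unfolding k_def using t2 by simp
      ultimately have "z ^ (k - 1) * z = 1 * z" using power_minus_mult[of k z] by simp
      then have "z ^ (k - 1) = 1" using pb(5) by simp
      moreover have a: "0 < k - 1" "k - 1 < d" unfolding k_def using t2 dt by auto
      ultimately show False using pb(3)[OF a] by simp
    qed
    moreover have "z ^ (k + 1) \<noteq> 1" using pb(3)[of "k+1"] t2 dt unfolding k_def by simp
    moreover have "1 \<le> k" unfolding k_def using t2 by simp
    ultimately show ?thesis using unit_geom[OF R_z, where k=k and l=k] z1 pb(4) by simp
  qed
qed



lemma good_quad:
  assumes P: "primitive_root_unity d z" and g: "d \<in> {1, 2, 3, 4, 6}"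
  shows "\<exists>t::int. z^2 = of_int t * z - 1"
proof -
  note pb = prim_basic[OF P]
  have z1: "d \<noteq> 1 \<Longrightarrow> z \<noteq> 1" using pb(3)[of 1] pb(1) by auto
  consider "d = 1" | "d = 2" | "d = 3" | "d = 4" | "d = 6" using g by auto
  then show ?thesis
  proof cases
    case 1
    then have "z = 1" using pb(2) by simp
    then show ?thesis by (intro exI[of _ 2]) simp
  next
    case 2
    then have "z = 1 \<or> z = -1" using pb(2) power2_eq_1_iff by blast
    then have "z = -1" using z1 2 by simp
    then show ?thesis by (intro exI[of _ "-2"]) simp
  next
    case 3
    have "(z - 1) * (z^2 + z + 1) = z^3 - 1" by (simp add: algebra_simps power2_eq_square power3_eq_cube)
    then have "(z - 1) * (z^2 + z + 1) = 0" using pb(2) 3 by simp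
    then have "z^2 + z + 1 = 0" using z1 3 by simp
    then have "z^2 = of_int (-1) * z - 1" by (simp add: algebra_simps add_eq_0_iff2)
    then show ?thesis by blast
  next
    case 4
    have "(z^2 - 1) * (z^2 + 1) = z^4 - 1" by (simp add: algebra_simps power2_eq_square power4_eq_xxxx)
    then have "(z^2 - 1) * (z^2 + 1) = 0" using pb(2) 4 by simp
    moreover have "z^2 \<noteq> 1" using pb(3)[of 2] 4 by simp
    ultimately have "z^2 + 1 = 0" by simp
    then have "z^2 = - 1" by (simp only: eq_neg_iff_add_eq_0)
    then have "z^2 = of_int 0 * z - 1" by simp
    then show ?thesis by blast
  next
    case 5
    have "(z^3 - 1) * (z^3 + 1) = z^6 - 1" by (simp add: algebra_simps flip: power_add)
    then have "(z^3 - 1) * (z^3 + 1) = 0" using pb(2) 5 by simp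
    moreover have "z^3 \<noteq> 1" using pb(3)[of 3] 5 by simp
    ultimately have h: "z^3 + 1 = 0" by simp
    have "(z + 1) * (z^2 - z + 1) = z^3 + 1" by (simp add: algebra_simps power2_eq_square power3_eq_cube)
    then have "(z + 1) * (z^2 - z + 1) = 0" using h by simp
    moreover have "z + 1 \<noteq> 0"
    proof
      assume "z + 1 = 0" then have "z = -1" by (simp add: add_eq_0_iff2)
      then have "z^2 = 1" by simp
      then show False using pb(3)[of 2] 5 by simp
    qed
    ultimately have "z^2 - z + 1 = 0" by simp
    then have "z^2 = of_int 1 * z - 1" by (simp add: algebra_simps)
    then show ?thesis by blast
  qed
qed

definition fr1 :: "complex \<Rightarrow> complex \<Rightarrow> int \<Rightarrow> int \<Rightarrow> complex" where
  "fr1 a b i j = (if j = i + 1 \<or> j = i + 3 then 1 else if j = i + 2 then (if even i then a else b) else 0)"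

lemma fr1_frieze:
  assumes ab: "a * b = 2" "a \<in> S" "b \<in> S"
  shows "fr1 a b \<in> friezes 1 S"
  unfolding friezes_def is_frieze_def
proof (intro CollectI conjI allI impI)
  fix i show "fr1 a b i i = 0" "fr1 a b i (i + int 1 + 3) = 0" "fr1 a b i (i + 1) = 1" "fr1 a b i (i + int 1 + 2) = 1"
    by (auto simp: fr1_def)
next
  fix i j :: int assume "i + 2 \<le> j \<and> j \<le> i + int 1 + 1"
  then have "j = i + 2" by simp
  then show "fr1 a b i j \<in> S" using ab by (simp add: fr1_def)
next
  fix i j :: int assume "\<not> frieze_dom 1 i j"
  then show "fr1 a b i j = 0" by (auto simp: fr1_def frieze_dom_def)
next
  fix i j :: int assume h: "frieze_dom 1 i j \<and> frieze_dom 1 (i + 1) (j + 1) \<and> frieze_dom 1 i (j + 1) \<and> frieze_dom 1 (i + 1) j"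
  then have "j = i + 1 \<or> j = i + 2 \<or> j = i + 3" by (auto simp: frieze_dom_def)
  then show "fr1 a b i j * fr1 a b (i + 1) (j + 1) - fr1 a b i (j + 1) * fr1 a b (i + 1) j = 1"
  proof (elim disjE)
    assume "j = i + 2"
    then show ?thesis using ab by (cases "even i") (auto simp: fr1_def mult.commute)
  qed (auto simp: fr1_def)
qed

lemma bad_conseq:
  assumes u: "u \<in> units_in (int_adjoin z)" and cu: "cmod u \<noteq> 1"
  shows "\<not> discrete (int_adjoin z)" "infinite (units_in (int_adjoin z))"
    "infinite (friezes 1 (int_adjoin z - {0}))"
proof -
  obtain v where uv: "u \<in> int_adjoin z" "v \<in> int_adjoin z" "u * v = 1" using u unfolding units_in_def by auto
  have cuv: "cmod u * cmod v = 1" using uv by (metis norm_mult norm_one)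
  obtain w w' where ww: "w \<in> int_adjoin z" "w' \<in> int_adjoin z" "w * w' = 1" "cmod w < 1"
  proof (cases "cmod u < 1")
    case True then show ?thesis using that uv by blast
  next
    case False
    then have "cmod u > 1" using cu by simp
    then have "cmod v < 1" using cuv by (metis less_1_mult linorder_neqE_linordered_idom norm_ge_zero order.strict_trans1 order_less_irrefl mult.commute mult_less_cancel_right1 mult_le_cancel_left1 not_less) 
    then show ?thesis using that[of v u] uv by (simp add: mult.commute)
  qed
  have w0: "w \<noteq> 0" using ww by auto
  have cw0: "0 < cmod w" using w0 by simp
  show "\<not> discrete (int_adjoin z)"
  proof
    assume "discrete (int_adjoin z)"
    then have "0 isolated_in int_adjoin z" using R_0 discreteD by blast
    then obtain e where e: "e > 0" "\<And>y. y \<in> int_adjoin z \<Longrightarrow> dist 0 y < e \<Longrightarrow> y = 0"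
      by (meson isolated_in_dist_Ex_iff)
    obtain k where "cmod w ^ k < e" using real_arch_pow_inv[OF e(1) ww(4)] by blast
    then have "dist 0 (w ^ k) < e" by (simp add: norm_power)
    then have "w ^ k = 0" using e(2) R_pow[OF ww(1)] by blast
    then show False using w0 by simp
  qed
  have inj: "inj (\<lambda>k::nat. w ^ k)"
  proof (rule injI)
    fix a b :: nat assume "w ^ a = w ^ b"
    then have "cmod w ^ a = cmod w ^ b" by (metis norm_power)
    then show "a = b" using cw0 ww(4) by (metis linorder_neqE_nat order_less_irrefl power_strict_decreasing_iff)
  qed
  have "range (\<lambda>k::nat. w ^ k) \<subseteq> units_in (int_adjoin z)"
  proof
    fix x assume "x \<in> range (\<lambda>k::nat. w ^ k)"
    then obtain k where x: "x = w ^ k" by auto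
    have "w ^ k * w' ^ k = 1" using ww(3) by (metis power_mult_distrib power_one)
    then show "x \<in> units_in (int_adjoin z)" unfolding units_in_def x using R_pow ww by blast
  qed
  moreover have "infinite (range (\<lambda>k::nat. w ^ k))" using inj by (simp add: infinite_UNIV_nat finite_image_iff)
  ultimately show "infinite (units_in (int_adjoin z))" using finite_subset by blast
  define F where "F k = fr1 (2 * w ^ k) (w' ^ k)" for k :: nat
  have "range F \<subseteq> friezes 1 (int_adjoin z - {0})"
  proof
    fix x assume "x \<in> range F"
    then obtain k where x: "x = F k" by auto
    have p: "w ^ k * w' ^ k = 1" using ww(3) by (metis power_mult_distrib power_one)
    then have "w' ^ k \<noteq> 0" by (metis mult_zero_right zero_neq_one)
    moreover have "2 * w ^ k \<in> int_adjoin z" using R_mult[OF R_int[of 2] R_pow[OF ww(1)]] by simp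
    moreover have "w' ^ k \<in> int_adjoin z" using R_pow[OF ww(2)] .
    moreover have "(2 * w ^ k) * (w' ^ k) = 2" using p by (simp add: mult.assoc)
    ultimately show "x \<in> friezes 1 (int_adjoin z - {0})" unfolding x F_def using w0
      by (intro fr1_frieze) auto
  qed
  moreover have "inj F"
  proof (rule injI)
    fix a b assume "F a = F b"
    then have "F a 0 2 = F b 0 2" by simp
    then have "w ^ a = w ^ b" by (simp add: F_def fr1_def)
    then show "a = b" using inj by (simp add: inj_eq)
  qed
  then have "infinite (range F)" by (simp add: infinite_UNIV_nat finite_image_iff)
  ultimately show "infinite (friezes 1 (int_adjoin z - {0}))" using finite_subset by blast
qed

theorem corollary3p10:
  fixes d :: nat and z :: complex
  assumes "primitive_root_unity d z"
  shows "((\<forall>n. finite (friezes n (int_adjoin z - {0}))) \<longleftrightarrow> discrete (int_adjoin z))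
       \<and> (discrete (int_adjoin z) \<longleftrightarrow> finite (units_in (int_adjoin z)))
       \<and> (finite (units_in (int_adjoin z)) \<longleftrightarrow> d \<in> {1, 2, 3, 4, 6})"
proof (cases "d \<in> {1, 2, 3, 4, 6}")
  case True
  obtain t where zt: "z^2 = of_int t * z - 1" using good_quad[OF assms True] by blast
  have cz: "cmod z = 1" using prim_basic[OF assms] by simp
  have ge1: "\<And>x. x \<in> int_adjoin z \<Longrightarrow> x \<noteq> 0 \<Longrightarrow> 1 \<le> cmod x" using norm_ge1[OF zt cz] by blast
  have "finite (friezes n (int_adjoin z - {0}))" for n
    using friezes_finite[of "int_adjoin z - {0}" n] R_locfin[OF ge1] by blast
  then show ?thesis using True R_discrete[OF ge1] R_units_finite[OF ge1] by blast
next
  case False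
  obtain u where "u \<in> units_in (int_adjoin z)" "cmod u \<noteq> 1" using bad_unit[OF assms False] by blast
  note b = bad_conseq[OF this]
  then show ?thesis using False by blast
qed


end
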